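(* Let $q>1$, $0\le M_0<M$, let $u$ be a sufficiently smooth $L$-periodic solution of $u_t=-\alpha uu_x+\beta u_{xxx}$ on $[0,T]\times\mathbb{R}$, and $r>\sup_{t,x}|u(t,x)|$. Assume $u^{(0)}_k=u(0,k\Delta x)$, that $u^{(0)},\dots,u^{(M_0)}$ are obtained successively as solutions of the scheme, that $r\ge\max_{m'\le M_0}\|u^{(m')}\|_\infty$, that $\Delta t<\min\{\varepsilon_1(q,r,\Delta x),\varepsilon_2(q,r,\Delta x)\}$, and let $u^{(M_0+1)}$ be the solution of the scheme at step $M_0$ with $\|u^{(M_0+1)}\|_\infty\le qr$. Let $C(q,r)>0$ be a constant, independent of $\Delta t$ and $\Delta x$, such that for sufficiently small $\Delta t\le\Delta x$ one has $\|e^{(m)}\|_{H^1}\le C(q,r)((\Delta t)^2+(\Delta x)^2)$ for $m=0,\dots,M_0+1$, and let $\Delta t\le \Delta x$ be that small. If $$\Delta x\le\left(\frac{r-\sup_{(t,x)\in[0,T]\times[0,L]}|u(t,x)|}{2\hat L\,C(q,r)}\right)^{1/2},\qquad \hat L=\sqrt2\max\{\sqrt L,1/\sqrt L\},$$ then $\|u^{(m)}\|_\infty\le r$ for $m=0,1,\dots,M_0+1$.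
   Context: $L>0$, $K\in\mathbb{N}$, $\Delta x=L/K$; $T>0$, $M\in\mathbb{N}$, $\Delta t=T/M$; $\alpha\in\mathbb{R}$, $\beta\ne0$. Grid functions are $K$-periodic real sequences. $\delta^+_x v_k=(v_{k+1}-v_k)/\Delta x$, $\delta^{\langle 1\rangle}_x v_k = (v_{k+1}-v_{k-1})/(2\Delta x)$, $\delta^{\langle 2\rangle}_x v_k = (v_{k+1}-2v_k+v_{k-1})/(\Delta x)^2$, $\|v\|=(\sum_{k=1}^K v_k^2\Delta x)^{1/2}$, $\|v\|_\infty=\max_k|v_k|$, $\|v\|_{H^1}=(\|v\|^2+\|\delta^+_xv\|^2)^{1/2}$; $\delta^+_t v^{(n)}=(v^{(n+1)}-v^{(n)})/\Delta t$, $\mu^+_t v^{(n)}=(v^{(n+1)}+v^{(n)})/2$. The scheme: $u^{(n+1)}$ solves it at step $n$ if $\delta^+_t u^{(n)}_k = -\frac{\alpha}{6}\delta^{\langle 1\rangle}_x\{(u^{(n+1)}_k)^2 + u^{(n+1)}_k u^{(n)}_k + (u^{(n)}_k)^2\} + \beta\delta^{\langle 1\rangle}_x\delta^{\langle 2\rangle}_x \mu^+_t u^{(n)}_k$ for all $k$. $\varepsilon_1(q,r,\Delta x) = (q-1)(\Delta x)^3[\frac{|\alpha|}{6}(\Delta x)^2(q^2+q+1)r + \frac{3}{2}|\beta|(q+1)]^{-1}$, $\varepsilon_2(q,r,\Delta x) = (\Delta x)^3[\frac{|\alpha|}{6}(\Delta x)^2(2q+1)r + \frac{3}{2}|\beta|]^{-1}$.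 $\tilde u^{(m)}_k=u(m\Delta t,k\Delta x)$, $e^{(m)}=u^{(m)}-\tilde u^{(m)}$. *)

theory Defs
  imports "HOL-Analysis.Analysis"
begin

definition kperiodic :: "nat \<Rightarrow> (int \<Rightarrow> real) \<Rightarrow> bool" where
  "kperiodic K v \<longleftrightarrow> (\<forall>k. v (k + int K) = v k)"

definition dplus :: "real \<Rightarrow> (int \<Rightarrow> real) \<Rightarrow> int \<Rightarrow> real" where
  "dplus dx v k = (v (k + 1) - v k) / dx"

definition d1 :: "real \<Rightarrow> (int \<Rightarrow> real) \<Rightarrow> int \<Rightarrow> real" where
  "d1 dx v k = (v (k + 1) - v (k - 1)) / (2 * dx)"

definition d2 :: "real \<Rightarrow> (int \<Rightarrow> real) \<Rightarrow> int \<Rightarrow> real" where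
  "d2 dx v k = (v (k + 1) - 2 * v k + v (k - 1)) / dx ^ 2"

definition l2norm :: "nat \<Rightarrow> real \<Rightarrow> (int \<Rightarrow> real) \<Rightarrow> real" where
  "l2norm K dx v = sqrt (\<Sum>k\<in>{1..int K}. (v k)^2 * dx)"

definition supnorm :: "nat \<Rightarrow> (int \<Rightarrow> real) \<Rightarrow> real" where
  "supnorm K v = Max ((\<lambda>k. \<bar>v k\<bar>) ` {1..int K})"

definition h1norm :: "nat \<Rightarrow> real \<Rightarrow> (int \<Rightarrow> real) \<Rightarrow> real" where
  "h1norm K dx v = sqrt ((l2norm K dx v)^2 + (l2norm K dx (dplus dx v))^2)"

definition scheme_step :: "real \<Rightarrow> real \<Rightarrow> real \<Rightarrow> real \<Rightarrow> (int \<Rightarrow> real) \<Rightarrow> (int \<Rightarrow> real) \<Rightarrow> bool" where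
  "scheme_step \<alpha> \<beta> dx dt v w \<longleftrightarrow>
     (\<forall>k. (w k - v k) / dt =
           - (\<alpha> / 6) * d1 dx (\<lambda>j. (w j)^2 + w j * v j + (v j)^2) k
           + \<beta> * d1 dx (d2 dx (\<lambda>j. (w j + v j) / 2)) k)"

definition eps1 :: "real \<Rightarrow> real \<Rightarrow> real \<Rightarrow> real \<Rightarrow> real \<Rightarrow> real" where
  "eps1 \<alpha> \<beta> q r dx = (q - 1) * dx ^ 3 /
     (\<bar>\<alpha>\<bar> / 6 * dx ^ 2 * (q^2 + q + 1) * r + 3 / 2 * \<bar>\<beta>\<bar> * (q + 1))"

definition eps2 :: "real \<Rightarrow> real \<Rightarrow> real \<Rightarrow> real \<Rightarrow> real \<Rightarrow> real" where
  "eps2 \<alpha> \<beta> q r dx = dx ^ 3 /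
     (\<bar>\<alpha>\<bar> / 6 * dx ^ 2 * (2 * q + 1) * r + 3 / 2 * \<bar>\<beta>\<bar>)"

definition kdv_solution :: "real \<Rightarrow> real \<Rightarrow> real \<Rightarrow> real \<Rightarrow> (real \<Rightarrow> real \<Rightarrow> real) \<Rightarrow> bool" where
  "kdv_solution \<alpha> \<beta> L T u \<longleftrightarrow>
     continuous_on ({0..T} \<times> UNIV) (\<lambda>(t, x). u t x) \<and>
     (\<forall>t x. u t (x + L) = u t x) \<and>
     (\<exists>ut ux uxx uxxx. \<forall>t\<in>{0..T}. \<forall>x.
        ((\<lambda>s. u s x) has_real_derivative ut t x) (at t within {0..T}) \<and>
        ((\<lambda>y. u t y) has_real_derivative ux t x) (at x) \<and>
        ((\<lambda>y. ux t y) has_real_derivative uxx t x) (at x) \<and>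
        ((\<lambda>y. uxx t y) has_real_derivative uxxx t x) (at x) \<and>
        ut t x = - \<alpha> * u t x * ux t x + \<beta> * uxxx t x)"

end

theory Submission
  imports Defs
begin

lemma telescope_abs:
  fixes e :: "int \<Rightarrow> real"
  assumes "a \<le> b"
  shows "\<bar>e b - e a\<bar> \<le> (\<Sum>i\<in>{a..<b}. \<bar>e (i+1) - e i\<bar>)"
  using assms
proof (induction b rule: int_ge_induct)
  case base
  then show ?case by simp
next
  case (step i)
  have "{a..<i+1} = insert i {a..<i}" using step by auto
  then have "(\<Sum>j\<in>{a..<i+1}. \<bar>e (j+1) - e j\<bar>) = \<bar>e (i+1) - e i\<bar> + (\<Sum>j\<in>{a..<i}. \<bar>e (j+1) - e j\<bar>)"
    by simp
  moreover have "\<bar>e (i+1) - e a\<bar> \<le> \<bar>e (i+1) - e i\<bar> + \<bar>e i - e a\<bar>" by linarith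
  ultimately show ?case using step by linarith
qed

lemma discrete_sobolev:
  fixes e :: "int \<Rightarrow> real"
  assumes K: "K > 0" and dx: "dx > 0" and L: "L = real K * dx" and k: "k \<in> {1..int K}"
  shows "\<bar>e k\<bar> \<le> sqrt 2 * max (sqrt L) (1 / sqrt L) * h1norm K dx e"
proof -
  define A where "A = (\<Sum>i\<in>{1..int K}. (e i)^2 * dx)"
  define B where "B = (\<Sum>i\<in>{1..int K}. (dplus dx e i)^2 * dx)"
  have A0: "A \<ge> 0" unfolding A_def using dx by (intro sum_nonneg) auto
  have B0: "B \<ge> 0" unfolding B_def using dx by (intro sum_nonneg) auto
  have Lpos: "L > 0" using K dx L by simp
  have cardK: "card {1..int K} = K" by simp
  have "\<exists>j\<in>{1..int K}. (e j)^2 * L \<le> A"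
  proof (rule ccontr)
    assume "\<not> ?thesis"
    then have h: "\<And>j. j \<in> {1..int K} \<Longrightarrow> A / L * dx < (e j)^2 * dx"
      using Lpos dx by (auto simp: field_simps not_le)
    have "(\<Sum>j\<in>{1..int K}. A / L * dx) < (\<Sum>j\<in>{1..int K}. (e j)^2 * dx)"
      using K by (intro sum_strict_mono) (simp_all add: h del: times_divide_eq_left)
    then have "(\<Sum>j\<in>{1..int K}. A / L * dx) < A" by (simp add: A_def)
    moreover have "(\<Sum>j\<in>{1..int K}. A / L * dx) = A"
      using Lpos L K dx by simp
    ultimately show False by simp
  qed
  then obtain j where j: "j \<in> {1..int K}" "(e j)^2 * L \<le> A" by blast
  have ej: "\<bar>e j\<bar> \<le> sqrt A / sqrt L"
  proof -
    have "(e j)^2 \<le> A / L" using j Lpos by (simp add: field_simps)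
    then have "sqrt ((e j)^2) \<le> sqrt (A / L)" by (rule real_sqrt_le_mono)
    then show ?thesis by (simp add: real_sqrt_divide)
  qed
  have diffeq: "\<And>i. \<bar>e (i+1) - e i\<bar> = \<bar>dplus dx e i\<bar> * dx"
    using dx by (simp add: dplus_def abs_divide)
  have tel: "\<bar>e k - e j\<bar> \<le> (\<Sum>i\<in>{1..int K}. \<bar>dplus dx e i\<bar> * dx)"
  proof (cases "j \<le> k")
    case True
    have "\<bar>e k - e j\<bar> \<le> (\<Sum>i\<in>{j..<k}. \<bar>e (i+1) - e i\<bar>)" by (rule telescope_abs[OF True])
    also have "\<dots> \<le> (\<Sum>i\<in>{1..int K}. \<bar>e (i+1) - e i\<bar>)"
      using j k by (intro sum_mono2) auto
    finally show ?thesis by (simp add: diffeq)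
  next
    case False
    have "\<bar>e j - e k\<bar> \<le> (\<Sum>i\<in>{k..<j}. \<bar>e (i+1) - e i\<bar>)" by (rule telescope_abs) (use False in simp)
    also have "\<dots> \<le> (\<Sum>i\<in>{1..int K}. \<bar>e (i+1) - e i\<bar>)"
      using j k by (intro sum_mono2) auto
    finally have "\<bar>e j - e k\<bar> \<le> (\<Sum>i\<in>{1..int K}. \<bar>dplus dx e i\<bar> * dx)" by (simp only: diffeq)
    then show ?thesis by (simp add: abs_minus_commute)
  qed
  have cs: "(\<Sum>i\<in>{1..int K}. \<bar>dplus dx e i\<bar> * dx)^2 \<le> L * B"
  proof -
    have "(\<Sum>i\<in>{1..int K}. \<bar>dplus dx e i\<bar> * dx)^2
        \<le> (\<Sum>i\<in>{1..int K}. (\<bar>dplus dx e i\<bar> * dx)^2) * card {1..int K}"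
      by (rule sum_squared_le_sum_of_squares)
    also have "\<dots> = (\<Sum>i\<in>{1..int K}. (dplus dx e i)^2 * dx) * (real K * dx)"
      by (simp add: sum_distrib_right sum_distrib_left power_mult_distrib power2_eq_square mult_ac)
    finally show ?thesis by (simp add: B_def L mult_ac)
  qed
  have sumle: "(\<Sum>i\<in>{1..int K}. \<bar>dplus dx e i\<bar> * dx) \<le> sqrt L * sqrt B"
  proof -
    have "sqrt ((\<Sum>i\<in>{1..int K}. \<bar>dplus dx e i\<bar> * dx)^2) \<le> sqrt (L * B)"
      using cs by (rule real_sqrt_le_mono)
    moreover have "(\<Sum>i\<in>{1..int K}. \<bar>dplus dx e i\<bar> * dx) \<ge> 0"
      using dx by (intro sum_nonneg) auto
    ultimately show ?thesis by (simp add: real_sqrt_mult)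
  qed
  define M where "M = max (sqrt L) (1 / sqrt L)"
  have "\<bar>e k\<bar> \<le> sqrt A / sqrt L + sqrt L * sqrt B" using ej tel sumle by linarith
  also have "\<dots> = (1 / sqrt L) * sqrt A + sqrt L * sqrt B" by simp
  also have "\<dots> \<le> M * sqrt A + M * sqrt B"
    unfolding M_def using A0 B0 by (intro add_mono mult_right_mono) auto
  also have "\<dots> = M * (sqrt A + sqrt B)" by (simp add: algebra_simps)
  also have "\<dots> \<le> M * (sqrt 2 * sqrt (A + B))"
  proof -
    have sa: "(sqrt A)^2 = A" and sb: "(sqrt B)^2 = B" using A0 B0 by simp_all
    have r2: "(sqrt 2 * sqrt (A + B))^2 = 2 * (A + B)"
      using A0 B0 by (simp add: power_mult_distrib)
    have gen: "(a + b)^2 \<le> 2 * (a^2 + b^2)" for a b :: real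
    proof -
      have "(a + b)^2 = 2 * (a^2 + b^2) - (a - b)^2" by (simp add: power2_eq_square algebra_simps)
      moreover have "(a - b)^2 \<ge> 0" by simp
      ultimately show ?thesis by linarith
    qed
    have "(sqrt A + sqrt B)^2 \<le> 2 * ((sqrt A)^2 + (sqrt B)^2)" by (rule gen)
    then have "(sqrt A + sqrt B)^2 \<le> (sqrt 2 * sqrt (A + B))^2" by (simp only: sa sb r2)
    then have "sqrt A + sqrt B \<le> sqrt 2 * sqrt (A + B)"
      by (rule power2_le_imp_le) (use A0 B0 in simp)
    moreover have "M \<ge> 0" unfolding M_def using Lpos by (simp add: le_max_iff_disj)
    ultimately show ?thesis by (rule mult_left_mono)
  qed
  also have "sqrt (A + B) = h1norm K dx e"
    unfolding h1norm_def l2norm_def A_def[symmetric] B_def[symmetric] using A0 B0 by simp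
  finally show ?thesis unfolding M_def by (simp add: mult_ac)
qed

theorem corollary3p7:
  fixes L T \<alpha> \<beta> q r C dx dt :: real and K Mt M0 :: nat
    and u :: "real \<Rightarrow> real \<Rightarrow> real" and U :: "nat \<Rightarrow> int \<Rightarrow> real"
  defines "S \<equiv> Sup {\<bar>u t x\<bar> | t x. t \<in> {0..T} \<and> x \<in> {0..L}}"
  defines "Lhat \<equiv> sqrt 2 * max (sqrt L) (1 / sqrt L)"
  assumes "L > 0" and "K > 0" and "dx = L / real K"
    and "T > 0" and "Mt > 0" and "dt = T / real Mt"
    and "\<beta> \<noteq> 0"
    and "q > 1" and "M0 < Mt"
    and "kdv_solution \<alpha> \<beta> L T u"
    and "r > S"
    and "\<And>m. m \<le> M0 + 1 \<Longrightarrow> kperiodic K (U m)"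
    and "\<And>k. U 0 k = u 0 (real_of_int k * dx)"
    and "\<And>m. m \<le> M0 \<Longrightarrow> scheme_step \<alpha> \<beta> dx dt (U m) (U (m + 1))"
    and "\<And>m. m \<le> M0 \<Longrightarrow> supnorm K (U m) \<le> r"
    and "dt < min (eps1 \<alpha> \<beta> q r dx) (eps2 \<alpha> \<beta> q r dx)"
    and "supnorm K (U (M0 + 1)) \<le> q * r"
    and "C > 0"
    and "dt \<le> dx"
    and "\<And>m. m \<le> M0 + 1 \<Longrightarrow>
           h1norm K dx (\<lambda>k. U m k - u (real m * dt) (real_of_int k * dx)) \<le> C * (dt^2 + dx^2)"
    and "dx \<le> sqrt ((r - S) / (2 * Lhat * C))"
  shows "\<forall>m \<le> M0 + 1. supnorm K (U m) \<le> r"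
proof (intro allI impI)
  fix m assume mle: "m \<le> M0 + 1"
  show "supnorm K (U m) \<le> r"
  proof (cases "m \<le> M0")
    case True
    then show ?thesis using assms by blast
  next
    case False
    then have mM: "m = M0 + 1" using mle by simp
    have dxpos: "dx > 0" using assms by simp
    have dt0: "dt \<ge> 0" using assms by simp
    have Lx: "L = real K * dx" using assms by simp
    have Lhpos: "Lhat > 0" unfolding Lhat_def using assms by (simp add: less_max_iff_disj)
    have cont: "continuous_on ({0..T} \<times> {0..L}) (\<lambda>(t, x). u t x)"
      using assms(12) unfolding kdv_solution_def by (rule continuous_on_subset[OF conjunct1]) auto
    have "compact ((\<lambda>(t, x). u t x) ` ({0..T} \<times> {0..L}))"
      by (intro compact_continuous_image cont compact_Times compact_Icc)
    then have "bounded ((\<lambda>(t, x). u t x) ` ({0..T} \<times> {0..L}))" by (rule compact_imp_bounded)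
    then obtain B where B: "\<forall>x\<in>{0..T}. \<forall>y\<in>{0..L}. \<bar>u x y\<bar> \<le> B"
      by (auto simp: bounded_iff)
    have bdd: "bdd_above {\<bar>u t x\<bar> | t x. t \<in> {0..T} \<and> x \<in> {0..L}}"
      unfolding bdd_above_def using B by fastforce
    have uS: "\<bar>u t x\<bar> \<le> S" if "t \<in> {0..T}" "x \<in> {0..L}" for t x
      unfolding S_def using that by (intro cSup_upper bdd) blast
    have tin: "real m * dt \<in> {0..T}"
    proof -
      have "real m * dt \<le> real Mt * dt" using mM assms(11) dt0 by (intro mult_right_mono) auto
      also have "\<dots> = T" using assms by simp
      finally show ?thesis using dt0 by simp
    qed
    have dx2: "dx^2 * (2 * Lhat * C) \<le> r - S"
    proof -
      have rS: "(r - S) / (2 * Lhat * C) \<ge> 0" using assms Lhpos by simp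
      have "dx^2 \<le> (sqrt ((r - S) / (2 * Lhat * C)))^2"
        using assms(23) dxpos by (intro power_mono) auto
      also have "\<dots> = (r - S) / (2 * Lhat * C)" using rS by simp
      finally show ?thesis using Lhpos assms(20) by (simp add: field_simps)
    qed
    have dtdx: "dt^2 \<le> dx^2" using dt0 assms(21) by (intro power_mono) auto
    define e where "e = (\<lambda>k. U m k - u (real m * dt) (real_of_int k * dx))"
    have h1: "h1norm K dx e \<le> C * (dt^2 + dx^2)" unfolding e_def using assms(22) mle by blast
    have pt: "\<bar>U m k\<bar> \<le> r" if k: "k \<in> {1..int K}" for k
    proof -
      have xin: "real_of_int k * dx \<in> {0..L}"
      proof -
        have "real_of_int k \<le> real K" using k by simp
        then have "real_of_int k * dx \<le> real K * dx" using dxpos by (intro mult_right_mono) auto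
        moreover have "real_of_int k \<ge> 0" using k by simp
        ultimately show ?thesis using Lx dxpos by simp
      qed
      have ek: "\<bar>e k\<bar> \<le> Lhat * h1norm K dx e"
        unfolding Lhat_def using discrete_sobolev[OF assms(4) dxpos Lx k] .
      have "\<bar>U m k\<bar> \<le> \<bar>u (real m * dt) (real_of_int k * dx)\<bar> + \<bar>e k\<bar>"
        unfolding e_def by linarith
      also have "\<dots> \<le> S + Lhat * (C * (dt^2 + dx^2))"
        using uS[OF tin xin] ek h1 Lhpos
        by (smt (verit) mult_left_mono)
      also have "\<dots> \<le> S + Lhat * (C * (2 * dx^2))"
        using dtdx Lhpos assms(20) by (intro add_left_mono mult_left_mono) auto
      also have "\<dots> = S + dx^2 * (2 * Lhat * C)" by (simp add: mult_ac)
      also have "\<dots> \<le> r" using dx2 by simp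
      finally show ?thesis .
    qed
    have "finite ((\<lambda>k. \<bar>U m k\<bar>) ` {1..int K})" by simp
    moreover have "(\<lambda>k. \<bar>U m k\<bar>) ` {1..int K} \<noteq> {}" using assms(4) by simp
    ultimately show ?thesis unfolding supnorm_def using pt by (simp add: Max_le_iff)
  qed
qed

end
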